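(* Consider the augmented LSTM model and the observer described in the context, driven by inputs $u_k\in\mathcal{U}$ and by the measured output $y_k=W_yh_k+b_y+d_k$ of the augmented model. If $h_k\in\mathcal{H}$ and $d_k\in\mathcal{D}$ for all $k\ge0$, then the set $\hat{\mathcal{I}}=\hat{\mathcal{C}}\times\mathcal{H}\times\mathcal{D}$, with $\hat{\mathcal{C}}=\{\hat c\in\mathbb{R}^n:\|\hat c\|_\infty\le \hat{\bar\sigma}^i\bar\sigma^c/(1-\hat{\bar\sigma}^f)\}$, is positively invariant for the observer state $\hat\chi=[\hat c^\top\ \hat h^\top\ \hat d^\top]^\top$.
   Context: Augmented LSTM model ($c,h\in\mathbb{R}^n$, $u\in\mathbb{R}^m$, $d,w,y\in\mathbb{R}^p$): $c_{k+1}=\sigma(W_fu_k+U_fh_k+b_f)\circ c_k+\sigma(W_iu_k+U_ih_k+b_i)\circ\tanh(W_cu_k+U_ch_k+b_c)$, $h_{k+1}=\sigma(W_ou_k+U_oh_k+b_o)\circ\tanh(c_{k+1})$, $d_{k+1}=d_k+w_k$, $y_k=W_yh_k+b_y+d_k$; $\sigma$ the logistic sigmoid, activations elementwise, $\circ$ elementwise product. $\mathcal{U}=\{u:\|u\|_\infty\le u_{max}\}$, $\mathcal{H}=\{h:\|h\|_\infty\le1\}$, $\mathcal{D}=\{d:\|d\|_\infty\le d_{max}\}$. Observer with gains $L_f,L_i,L_o\in\mathbb{R}^{n\times p}$, $L_d\in\mathbb{R}^{p\times p}$: $\hat c_{k+1}=\sigma(W_fu_k+U_f\hat h_k+b_f+L_f(y_k-\hat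 y_k))\circ\hat c_k+\sigma(W_iu_k+U_i\hat h_k+b_i+L_i(y_k-\hat y_k))\circ\tanh(W_cu_k+U_c\hat h_k+b_c)$, $\hat h_{k+1}=\sigma(W_ou_k+U_o\hat h_k+b_o+L_o(y_k-\hat y_k))\circ\tanh(\hat c_{k+1})$, $\hat d_{k+1}=\mathrm{sat}(\hat d_k+L_d(y_k-\hat y_k),d_{max})$, $\hat y_k=W_y\hat h_k+b_y+\hat d_k$, where $\mathrm{sat}(v,v_{max})$ saturates each component to $[-v_{max},v_{max}]$. With $\|\cdot\|_\infty$ the induced $\infty$-norm of horizontally concatenated blocks: $\bar\sigma^c=\tanh(\|[W_cu_{max}\ U_c\ b_c]\|_\infty)$, $\hat{\bar\sigma}^f=\sigma(\|[W_fu_{max},\ U_f-L_fW_y,\ b_f,\ L_fW_y,\ 2L_fd_{max}]\|_\infty)$, $\hat{\bar\sigma}^i=\sigma(\|[W_iu_{max},\ U_i-L_iW_y,\ b_i,\ L_iW_y,\ 2L_id_{max}]\|_\infty)$. *)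

theory Defs
  imports "HOL-Analysis.Analysis"
begin

text \<open>Vectors in R^n are real^'n, matrices in R^{n x m} are real^'m^'n (rows indexed by 'n).\<close>

definition sigmoid :: "real \<Rightarrow> real" where
  "sigmoid x = 1 / (1 + exp (- x))"

definition vmap :: "(real \<Rightarrow> real) \<Rightarrow> real^'n \<Rightarrow> real^'n" where
  "vmap f v = (\<chi> i. f (v $ i))"

definition hprod :: "real^'n \<Rightarrow> real^'n \<Rightarrow> real^'n" (infixl "\<circ>\<^sub>v" 70) where
  "x \<circ>\<^sub>v y = (\<chi> i. x $ i * y $ i)"

definition sat :: "real^'n \<Rightarrow> real \<Rightarrow> real^'n" where
  "sat v vmax = (\<chi> i. max (- vmax) (min vmax (v $ i)))"

definition hcat :: "real^'a^'r \<Rightarrow> real^'b^'r \<Rightarrow> real^('a + 'b)^'r" where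
  "hcat A B = (\<chi> i. \<chi> j. (case j of Inl a \<Rightarrow> A $ i $ a | Inr b \<Rightarrow> B $ i $ b))"

definition col :: "real^'r \<Rightarrow> real^1^'r" where
  "col v = (\<chi> i. \<chi> j. v $ i)"

definition mat_infnorm :: "real^'c^'r \<Rightarrow> real" where
  "mat_infnorm A = Max (range (\<lambda>i. \<Sum>j\<in>UNIV. \<bar>A $ i $ j\<bar>))"

end

theory Submission
  imports Defs
begin

definition rs :: "real^'c::finite^'r::finite \<Rightarrow> 'r \<Rightarrow> real" where
  "rs A i = (\<Sum>j\<in>UNIV. \<bar>A $ i $ j\<bar>)"

lemma sum_UNIV_plus: "sum f (UNIV::('a::finite + 'b::finite) set) = sum (f \<circ> Inl) UNIV + sum (f \<circ> Inr) UNIV"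
  by (metis UNIV_Plus_UNIV finite sum.Plus)

lemma rs_hcat: "rs (hcat A B) i = rs A i + rs B i"
  unfolding rs_def hcat_def by (simp add: sum_UNIV_plus o_def)

lemma rs_col: "rs (col v) i = \<bar>v $ i\<bar>"
  unfolding rs_def col_def by simp

lemma rs_scale: "rs (c *\<^sub>R A) i = \<bar>c\<bar> * rs A i"
  by (simp add: rs_def abs_mult sum_distrib_left)

lemma rs_le: "rs A i \<le> mat_infnorm A"
  unfolding mat_infnorm_def rs_def by (rule Max_ge) auto

lemma mv_bound:
  assumes "\<forall>j. \<bar>x $ j\<bar> \<le> M"
  shows "\<bar>(A *v x) $ i\<bar> \<le> rs A i * M"
proof -
  have "\<bar>(A *v x) $ i\<bar> = \<bar>\<Sum>j\<in>UNIV. A $ i $ j * x $ j\<bar>"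
    by (simp add: matrix_vector_mult_def)
  also have "\<dots> \<le> (\<Sum>j\<in>UNIV. \<bar>A $ i $ j * x $ j\<bar>)" by (rule sum_abs)
  also have "\<dots> \<le> (\<Sum>j\<in>UNIV. \<bar>A $ i $ j\<bar> * M)"
    by (rule sum_mono) (simp add: abs_mult mult_left_mono assms)
  also have "\<dots> = rs A i * M" by (simp add: rs_def sum_distrib_right)
  finally show ?thesis .
qed

lemma infnorm_le_cart: "(\<And>i. \<bar>x $ i\<bar> \<le> M) \<Longrightarrow> infnorm (x::real^'n) \<le> M"
  unfolding infnorm_cart by (rule cSup_least) auto

lemma sigmoid_pos: "0 < sigmoid x"
  unfolding sigmoid_def by (simp add: add_pos_pos)

lemma sigmoid_lt1: "sigmoid x < 1"
proof -
  have "0 < exp (- x)" by simp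
  then have a: "1 < 1 + exp (- x)" "0 < 1 + exp (- x)" by linarith+
  then show ?thesis unfolding sigmoid_def by (simp add: divide_less_eq_1)
qed

lemma sigmoid_mono: "x \<le> y \<Longrightarrow> sigmoid x \<le> sigmoid y"
  unfolding sigmoid_def by (rule frac_le) (auto simp: add_pos_pos)

lemma sigmoid_bound: "\<bar>x\<bar> \<le> M \<Longrightarrow> sigmoid x \<le> sigmoid M"
  by (rule sigmoid_mono) simp

lemma tanh_bound: "\<bar>x\<bar> \<le> M \<Longrightarrow> \<bar>tanh (x::real)\<bar> \<le> tanh M"
  by (metis tanh_real_abs tanh_real_le_iff)

lemma cgate_bound:
  fixes W :: "real^'m::finite^'n::finite" and U :: "real^'n^'n"
  assumes "\<forall>j. \<bar>u $ j\<bar> \<le> um" "\<forall>j. \<bar>hh $ j\<bar> \<le> 1" "um \<ge> 0"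
  shows "\<bar>(W *v u + U *v hh + b) $ j\<bar> \<le> mat_infnorm (hcat (hcat (um *\<^sub>R W) U) (col b))"
proof -
  have "\<bar>(W *v u + U *v hh + b) $ j\<bar> \<le> \<bar>(W *v u) $ j\<bar> + \<bar>(U *v hh) $ j\<bar> + \<bar>b $ j\<bar>"
    by simp
  also have "\<dots> \<le> rs W j * um + rs U j * 1 + \<bar>b $ j\<bar>"
    using mv_bound[OF assms(1)] mv_bound[OF assms(2)] by (meson add_mono order_refl)
  also have "\<dots> = rs (hcat (hcat (um *\<^sub>R W) U) (col b)) j"
    using assms(3) by (simp add: rs_hcat rs_col rs_scale)
  finally show ?thesis using rs_le order_trans by blast
qed

lemma gate_bound:
  fixes W :: "real^'m::finite^'n::finite" and U :: "real^'n^'n" and L :: "real^'p::finite^'n"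
    and Wy :: "real^'n^'p"
  assumes "\<forall>j. \<bar>u $ j\<bar> \<le> um" "\<forall>j. \<bar>hh $ j\<bar> \<le> 1" "\<forall>j. \<bar>h $ j\<bar> \<le> 1"
    "\<forall>j. \<bar>d $ j\<bar> \<le> dm" "\<forall>j. \<bar>dh $ j\<bar> \<le> dm" "um \<ge> 0" "dm \<ge> 0"
  shows "\<bar>(W *v u + U *v hh + b + L *v ((Wy *v h + by + d) - (Wy *v hh + by + dh))) $ j\<bar>
     \<le> mat_infnorm (hcat (hcat (hcat (hcat (um *\<^sub>R W) (U - L ** Wy)) (col b)) (L ** Wy)) ((2*dm) *\<^sub>R L))"
proof -
  have dd: "\<forall>j. \<bar>(d - dh) $ j\<bar> \<le> 2 * dm"
    using assms(4,5) by (smt (verit) vector_minus_component)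
  have eq: "W *v u + U *v hh + b + L *v ((Wy *v h + by + d) - (Wy *v hh + by + dh))
     = W *v u + (U - L ** Wy) *v hh + b + (L ** Wy) *v h + L *v (d - dh)"
    by (simp add: algebra_simps matrix_vector_mul_assoc[symmetric])
  have "\<bar>(W *v u + (U - L ** Wy) *v hh + b + (L ** Wy) *v h + L *v (d - dh)) $ j\<bar>
     \<le> \<bar>(W *v u) $ j\<bar> + \<bar>((U - L ** Wy) *v hh) $ j\<bar> + \<bar>b $ j\<bar> + \<bar>((L ** Wy) *v h) $ j\<bar>
        + \<bar>(L *v (d - dh)) $ j\<bar>"
    by simp
  also have "\<dots> \<le> rs W j * um + rs (U - L ** Wy) j * 1 + \<bar>b $ j\<bar> + rs (L ** Wy) j * 1
        + rs L j * (2 * dm)"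
    using mv_bound[OF assms(1)] mv_bound[OF assms(2)] mv_bound[OF assms(3)] mv_bound[OF dd]
    by (meson add_mono order_refl)
  also have "\<dots> = rs (hcat (hcat (hcat (hcat (um *\<^sub>R W) (U - L ** Wy)) (col b)) (L ** Wy)) ((2*dm) *\<^sub>R L)) j"
    using assms(6,7) by (simp add: rs_hcat rs_col rs_scale)
  finally show ?thesis unfolding eq using rs_le order_trans by blast
qed

theorem lemma3:
  fixes W_f W_i W_c W_o :: "real^'m::finite^'n::finite"
    and U_f U_i U_c U_o :: "real^'n^'n"
    and b_f b_i b_c b_o :: "real^'n"
    and W_y :: "real^'n^'p::finite" and b_y :: "real^'p"
    and L_f L_i L_o :: "real^'p^'n" and L_d :: "real^'p^'p"
    and u_max d_max :: real
    and u :: "nat \<Rightarrow> real^'m"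
    and c h :: "nat \<Rightarrow> real^'n" and d w :: "nat \<Rightarrow> real^'p"
    and ch hh :: "nat \<Rightarrow> real^'n" and dh :: "nat \<Rightarrow> real^'p"
  defines "y \<equiv> (\<lambda>k. W_y *v h k + b_y + d k)"
    and "yh \<equiv> (\<lambda>k. W_y *v hh k + b_y + dh k)"
    and "sig_c \<equiv> tanh (mat_infnorm (hcat (hcat (u_max *\<^sub>R W_c) U_c) (col b_c)))"
    and "sig_f \<equiv> sigmoid (mat_infnorm (hcat (hcat (hcat (hcat (u_max *\<^sub>R W_f) (U_f - L_f ** W_y))
                   (col b_f)) (L_f ** W_y)) ((2 * d_max) *\<^sub>R L_f)))"
    and "sig_i \<equiv> sigmoid (mat_infnorm (hcat (hcat (hcat (hcat (u_max *\<^sub>R W_i) (U_i - L_i ** W_y))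
                   (col b_i)) (L_i ** W_y)) ((2 * d_max) *\<^sub>R L_i)))"
  assumes sys_c: "\<And>k. c (Suc k) =
      vmap sigmoid (W_f *v u k + U_f *v h k + b_f) \<circ>\<^sub>v c k
      + vmap sigmoid (W_i *v u k + U_i *v h k + b_i) \<circ>\<^sub>v vmap tanh (W_c *v u k + U_c *v h k + b_c)"
    and sys_h: "\<And>k. h (Suc k) = vmap sigmoid (W_o *v u k + U_o *v h k + b_o) \<circ>\<^sub>v vmap tanh (c (Suc k))"
    and sys_d: "\<And>k. d (Suc k) = d k + w k"
    and obs_c: "\<And>k. ch (Suc k) =
      vmap sigmoid (W_f *v u k + U_f *v hh k + b_f + L_f *v (y k - yh k)) \<circ>\<^sub>v ch k
      + vmap sigmoid (W_i *v u k + U_i *v hh k + b_i + L_i *v (y k - yh k))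
          \<circ>\<^sub>v vmap tanh (W_c *v u k + U_c *v hh k + b_c)"
    and obs_h: "\<And>k. hh (Suc k) =
      vmap sigmoid (W_o *v u k + U_o *v hh k + b_o + L_o *v (y k - yh k)) \<circ>\<^sub>v vmap tanh (ch (Suc k))"
    and obs_d: "\<And>k. dh (Suc k) = sat (dh k + L_d *v (y k - yh k)) d_max"
    and u_in: "\<And>k. infnorm (u k) \<le> u_max"
    and h_in: "\<And>k. infnorm (h k) \<le> 1"
    and d_in: "\<And>k. infnorm (d k) \<le> d_max"
  shows "\<forall>k0. (infnorm (ch k0) \<le> sig_i * sig_c / (1 - sig_f) \<and> infnorm (hh k0) \<le> 1 \<and> infnorm (dh k0) \<le> d_max)
     \<longrightarrow> (\<forall>k\<ge>k0. infnorm (ch k) \<le> sig_i * sig_c / (1 - sig_f) \<and> infnorm (hh k) \<le> 1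
                      \<and> infnorm (dh k) \<le> d_max)"
proof -
  define B where "B = sig_i * sig_c / (1 - sig_f)"
  have um: "u_max \<ge> 0" using u_in[of 0] infnorm_pos_le order_trans by blast
  have dm: "d_max \<ge> 0" using d_in[of 0] infnorm_pos_le order_trans by blast
  have sf1: "sig_f < 1" "0 < sig_f" unfolding sig_f_def using sigmoid_lt1 sigmoid_pos by auto
  have si0: "0 < sig_i" unfolding sig_i_def using sigmoid_pos by auto
  have ucomp: "\<forall>j. \<bar>u k $ j\<bar> \<le> u_max" for k using u_in[of k] component_le_infnorm_cart order_trans by blast
  have hcomp: "\<forall>j. \<bar>h k $ j\<bar> \<le> 1" for k using h_in[of k] component_le_infnorm_cart order_trans by blast
  have dcomp: "\<forall>j. \<bar>d k $ j\<bar> \<le> d_max" for k using d_in[of k] component_le_infnorm_cart order_trans by blast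
  have stepP: "infnorm (ch (Suc k)) \<le> B \<and> infnorm (hh (Suc k)) \<le> 1 \<and> infnorm (dh (Suc k)) \<le> d_max"
    if P: "infnorm (ch k) \<le> B" "infnorm (hh k) \<le> 1" "infnorm (dh k) \<le> d_max" for k
  proof (intro conjI)
    have hhc: "\<forall>j. \<bar>hh k $ j\<bar> \<le> 1" using P(2) component_le_infnorm_cart order_trans by blast
    have dhc: "\<forall>j. \<bar>dh k $ j\<bar> \<le> d_max" using P(3) component_le_infnorm_cart order_trans by blast
    have chc: "\<bar>ch k $ j\<bar> \<le> B" for j using P(1) component_le_infnorm_cart order_trans by blast
    show "infnorm (ch (Suc k)) \<le> B"
    proof (rule infnorm_le_cart)
      fix j
      define sf where "sf = sigmoid ((W_f *v u k + U_f *v hh k + b_f + L_f *v (y k - yh k)) $ j)"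
      define si where "si = sigmoid ((W_i *v u k + U_i *v hh k + b_i + L_i *v (y k - yh k)) $ j)"
      define tc where "tc = tanh ((W_c *v u k + U_c *v hh k + b_c) $ j)"
      have e: "ch (Suc k) $ j = sf * ch k $ j + si * tc"
        unfolding obs_c sf_def si_def tc_def by (simp add: hprod_def vmap_def)
      have sfb: "sf \<le> sig_f" unfolding sf_def sig_f_def y_def yh_def
        by (rule sigmoid_bound, rule gate_bound[OF ucomp hhc hcomp dcomp dhc um dm])
      have sib: "si \<le> sig_i" unfolding si_def sig_i_def y_def yh_def
        by (rule sigmoid_bound, rule gate_bound[OF ucomp hhc hcomp dcomp dhc um dm])
      have tcb: "\<bar>tc\<bar> \<le> sig_c" unfolding tc_def sig_c_def
        by (rule tanh_bound, rule cgate_bound[OF ucomp hhc um])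
      have sf0: "0 \<le> sf" "0 \<le> si" unfolding sf_def si_def using sigmoid_pos less_imp_le by auto
      have "\<bar>ch (Suc k) $ j\<bar> \<le> sf * \<bar>ch k $ j\<bar> + si * \<bar>tc\<bar>"
        unfolding e using sf0 by (simp add: abs_mult order_trans[OF abs_triangle_ineq])
      also have "\<dots> \<le> sig_f * B + sig_i * sig_c"
        by (rule add_mono; rule mult_mono) (use sfb sib tcb chc sf1 si0 in auto)
      also have "\<dots> = B" unfolding B_def using sf1 by (simp add: field_simps)
      finally show "\<bar>ch (Suc k) $ j\<bar> \<le> B" .
    qed
    show "infnorm (hh (Suc k)) \<le> 1"
    proof (rule infnorm_le_cart)
      fix j
      define so where "so = sigmoid ((W_o *v u k + U_o *v hh k + b_o + L_o *v (y k - yh k)) $ j)"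
      define t where "t = tanh (ch (Suc k) $ j)"
      have e: "hh (Suc k) $ j = so * t"
        unfolding obs_h so_def t_def by (simp add: hprod_def vmap_def)
      have "\<bar>so\<bar> \<le> 1" unfolding so_def using sigmoid_pos sigmoid_lt1 by (simp add: less_imp_le abs_of_pos)
      moreover have "\<bar>t\<bar> \<le> 1" unfolding t_def using tanh_real_bounds
        by (smt (verit) greaterThanLessThan_iff)
      ultimately show "\<bar>hh (Suc k) $ j\<bar> \<le> 1" unfolding e abs_mult
        by (metis abs_ge_zero mult_le_one)
    qed
    show "infnorm (dh (Suc k)) \<le> d_max"
      by (rule infnorm_le_cart) (use dm in \<open>simp add: obs_d sat_def\<close>)
  qed
  show ?thesis
  proof (rule allI, rule impI)
    fix k0 assume H: "infnorm (ch k0) \<le> sig_i * sig_c / (1 - sig_f) \<and> infnorm (hh k0) \<le> 1 \<and> infnorm (dh k0) \<le> d_max"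
    show "\<forall>k\<ge>k0. infnorm (ch k) \<le> sig_i * sig_c / (1 - sig_f) \<and> infnorm (hh k) \<le> 1 \<and> infnorm (dh k) \<le> d_max"
    proof (intro allI impI)
      fix k assume "k0 \<le> k"
      then show "infnorm (ch k) \<le> sig_i * sig_c / (1 - sig_f) \<and> infnorm (hh k) \<le> 1 \<and> infnorm (dh k) \<le> d_max"
      proof (induction k rule: dec_induct)
        case base then show ?case using H by blast
      next
        case (step k) then show ?case using stepP[of k] unfolding B_def by blast
      qed
    qed
  qed
qed

end
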